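(* Let $M$ be a matroid such that the 1-skeleton of $P(M)$ (equivalently, the base graph $G(M)$) is isomorphic to the graph of a $d$-dimensional hypercube. Then $P(M)$ is indecomposable.
   Context: For a matroid $N$ on $E=\{1,\dots,n\}$, $P(N)=\mathrm{conv}\{\sum_{i\in B}e_i : B \text{ a base of } N\}\subset\mathbb{R}^n$. The base graph $G(M)$ has the bases of $M$ as vertices, two bases adjacent iff their symmetric difference has exactly two elements. A matroid base polytope decomposition of $P(M)$ is an expression $P(M)=\bigcup_{i=1}^t P(M_i)$ with each $M_i$ a matroid on $E$ and $P(M_i)\cap P(M_j)$ a face of both $P(M_i)$ and $P(M_j)$ for all $i\neq j$. $P(M)$ is decomposable if it has such a decomposition with $t\ge 2$ and every $P(M_i)\neq P(M)$, and indecomposable otherwise. *)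

theory Defs
  imports "HOL-Analysis.Analysis"
begin

text \<open>A matroid on the finite ground set E = UNIV :: 'n set, given by its family of bases
  (basis exchange axiom).\<close>
definition matroid_bases :: "'n::finite set set \<Rightarrow> bool" where
  "matroid_bases \<B> \<longleftrightarrow> \<B> \<noteq> {} \<and>
     (\<forall>B1\<in>\<B>. \<forall>B2\<in>\<B>. \<forall>x\<in>B1 - B2. \<exists>y\<in>B2 - B1. insert y (B1 - {x}) \<in> \<B>)"

definition ind_vec :: "'n::finite set \<Rightarrow> real ^ 'n" where
  "ind_vec S = (\<chi> i. if i \<in> S then 1 else 0)"

definition base_polytope :: "'n::finite set set \<Rightarrow> (real ^ 'n) set" where
  "base_polytope \<B> = convex hull (ind_vec ` \<B>)"

definition sdiff :: "'a set \<Rightarrow> 'a set \<Rightarrow> 'a set" where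
  "sdiff A B = (A - B) \<union> (B - A)"

definition decomposable :: "'n::finite set set \<Rightarrow> bool" where
  "decomposable \<B> \<longleftrightarrow> (\<exists>(t::nat) (Ms :: nat \<Rightarrow> 'n set set).
      t \<ge> 2 \<and>
      (\<forall>i<t. matroid_bases (Ms i)) \<and>
      base_polytope \<B> = (\<Union>i<t. base_polytope (Ms i)) \<and>
      (\<forall>i<t. \<forall>j<t. i \<noteq> j \<longrightarrow>
          (base_polytope (Ms i) \<inter> base_polytope (Ms j)) face_of base_polytope (Ms i) \<and>
          (base_polytope (Ms i) \<inter> base_polytope (Ms j)) face_of base_polytope (Ms j)) \<and>
      (\<forall>i<t. base_polytope (Ms i) \<noteq> base_polytope \<B>))"

definition indecomposable :: "'n::finite set set \<Rightarrow> bool" where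
  "indecomposable \<B> \<longleftrightarrow> \<not> decomposable \<B>"

text \<open>Base graph G(M): vertices the bases, adjacent iff symmetric difference has 2 elements.
  The d-dimensional hypercube graph: vertices the subsets of {0..<d}, adjacent iff their
  symmetric difference has exactly 1 element.\<close>
definition base_graph_iso_hypercube :: "'n::finite set set \<Rightarrow> nat \<Rightarrow> bool" where
  "base_graph_iso_hypercube \<B> d \<longleftrightarrow> (\<exists>f. bij_betw f \<B> (Pow {..<d}) \<and>
      (\<forall>B1\<in>\<B>. \<forall>B2\<in>\<B>. card (sdiff B1 B2) = 2 \<longleftrightarrow> card (sdiff (f B1) (f B2)) = 1))"

end

theory Submission
  imports Defs
begin

lemma coord01: fixes a b u x :: real
  assumes "0<u" "u<1" "0\<le>a" "a\<le>1" "0\<le>b" "b\<le>1" "x=0 \<or> x=1" "x = (1-u)*a + u*b"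
  shows "a = x"
proof -
  have h: "0 \<le> (1-u)*a" "0 \<le> u*b" "0 \<le> (1-u)*(1-a)" "0 \<le> u*(1-b)" using assms by auto
  have h1: "(1-u)*a = 0 \<Longrightarrow> a = 0" using assms by auto
  have h2: "(1-u)*(1-a) = 0 \<Longrightarrow> a = 1" using assms by auto
  show ?thesis
  proof (cases "x = 0")
    case True
    then have "(1-u)*a = 0" using h assms(8) by linarith
    then show ?thesis using h1 True by simp
  next
    case False
    then have "x = 1" using assms(7) by simp
    then have "(1-u)*(1-a) + u*(1-b) = 0" using assms(8) by (simp add: algebra_simps)
    then have "(1-u)*(1-a) = 0" using h by linarith
    then show ?thesis using h2 \<open>x=1\<close> by simp
  qed
qed

lemma ind_vec_inj: "ind_vec A = ind_vec B \<Longrightarrow> A = B"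
proof -
  assume h: "ind_vec A = ind_vec B"
  have "\<And>i. (i \<in> A) = (i \<in> B)"
  proof -
    fix i
    have "ind_vec A $ i = ind_vec B $ i" using h by simp
    then show "(i \<in> A) = (i \<in> B)" by (auto simp: ind_vec_def split: if_splits)
  qed
  then show ?thesis by auto
qed

lemma hull_cube: "convex hull (ind_vec ` X) \<subseteq> {y::real^'n::finite. \<forall>i. 0 \<le> y$i \<and> y$i \<le> 1}"
proof (rule hull_minimal)
  show "ind_vec ` X \<subseteq> {y::real^'n::finite. \<forall>i. 0 \<le> y$i \<and> y$i \<le> 1}"
    by (auto simp: ind_vec_def)
  show "convex {y::real^'n::finite. \<forall>i. 0 \<le> y$i \<and> y$i \<le> 1}"
    unfolding convex_def by (auto intro!: add_nonneg_nonneg convex_bound_le)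
qed

lemma ind_in_hull:
  assumes "ind_vec B \<in> convex hull (ind_vec ` X)" shows "B \<in> X"
proof -
  let ?H = "convex hull (ind_vec ` X)"
  have ext: "ind_vec B extreme_point_of ?H"
    unfolding extreme_point_of_def
  proof (intro conjI ballI)
    show "ind_vec B \<in> ?H" by fact
    fix a b assume a: "a \<in> ?H" and b: "b \<in> ?H"
    show "ind_vec B \<notin> open_segment a b"
    proof
      assume "ind_vec B \<in> open_segment a b"
      then obtain u where u: "a \<noteq> b" "0 < u" "u < 1" "ind_vec B = (1-u) *\<^sub>R a + u *\<^sub>R b"
        by (auto simp: in_segment)
      have ac: "\<And>i. 0 \<le> a$i \<and> a$i \<le> 1" using a hull_cube by blast
      have bc: "\<And>i. 0 \<le> b$i \<and> b$i \<le> 1" using b hull_cube by blast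
      have x01: "\<And>i. ind_vec B $ i = 0 \<or> ind_vec B $ i = 1" by (simp add: ind_vec_def)
      have "\<And>i. a$i = ind_vec B $ i"
      proof -
        fix i
        have "ind_vec B $ i = (1-u) * a$i + u * b$i" using u(4) by simp
        then show "a$i = ind_vec B $ i" using coord01[of u "a$i" "b$i" "ind_vec B $ i"] u ac bc x01 by blast
      qed
      moreover have "\<And>i. b$i = ind_vec B $ i"
      proof -
        fix i
        have "ind_vec B $ i = (1-(1-u)) * b$i + (1-u) * a$i" using u(4) by simp
        then show "b$i = ind_vec B $ i" using coord01[of "1-u" "b$i" "a$i" "ind_vec B $ i"] u ac bc x01 by auto
      qed
      ultimately have "a = b" by (simp add: vec_eq_iff)
      then show False using u(1) by simp
    qed
  qed
  then have "ind_vec B \<in> ind_vec ` X" by (rule extreme_point_of_convex_hull)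
  then show ?thesis using ind_vec_inj by auto
qed


lemma no_odd_triangle:
  assumes "card (sdiff U V) = 1" "card (sdiff V W) = 1" "card (sdiff U W) = 1"
  shows False
proof -
  obtain p where p: "sdiff U V = {p}" using assms(1) card_1_singletonE by blast
  obtain q where q: "sdiff V W = {q}" using assms(2) card_1_singletonE by blast
  obtain r where r: "sdiff U W = {r}" using assms(3) card_1_singletonE by blast
  have P: "\<And>z. ((z \<in> U) \<noteq> (z \<in> V)) = (z = p)" using p unfolding sdiff_def by blast
  have Q: "\<And>z. ((z \<in> V) \<noteq> (z \<in> W)) = (z = q)" using q unfolding sdiff_def by blast
  have R: "\<And>z. ((z \<in> U) \<noteq> (z \<in> W)) = (z = r)" using r unfolding sdiff_def by blast
  show False
  proof (cases "p = q")
    case True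
    have "(r \<in> U) \<noteq> (r \<in> W)" using R by simp
    moreover have "(r \<in> U) \<noteq> (r \<in> V) \<longleftrightarrow> (r \<in> V) \<noteq> (r \<in> W)"
      using P[of r] Q[of r] True by simp
    ultimately show False by blast
  next
    case False
    have "(p \<in> U) \<noteq> (p \<in> V)" using P by simp
    moreover have "(p \<in> V) = (p \<in> W)" using Q[of p] False by simp
    ultimately have "(p \<in> U) \<noteq> (p \<in> W)" by blast
    then have pr: "p = r" using R by blast
    have "(q \<in> V) \<noteq> (q \<in> W)" using Q by simp
    moreover have "(q \<in> U) = (q \<in> V)" using P[of q] False by auto
    ultimately have "(q \<in> U) \<noteq> (q \<in> W)" by blast
    then have "q = r" using R by blast
    then show False using pr False by simp
  qed
qed

lemma no_triangle:
  fixes \<B> :: "'n::finite set set"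
  assumes iso: "base_graph_iso_hypercube \<B> d" and B: "B \<in> \<B>" and x: "x \<in> B"
    and y: "y \<notin> B" and y': "y' \<notin> B" and yy: "y \<noteq> y'"
    and B1: "insert y (B - {x}) \<in> \<B>" and B2: "insert y' (B - {x}) \<in> \<B>"
  shows False
proof -
  obtain f :: "'n set \<Rightarrow> nat set" where f: "\<forall>B1\<in>\<B>. \<forall>B2\<in>\<B>. card (sdiff B1 B2) = 2 \<longleftrightarrow> card (sdiff (f B1) (f B2)) = 1"
    using iso unfolding base_graph_iso_hypercube_def by blast
  have xy: "x \<noteq> y" "x \<noteq> y'" using x y y' by auto
  have "sdiff B (insert y (B - {x})) = {x,y}" using x y unfolding sdiff_def by auto
  then have "card (sdiff B (insert y (B - {x}))) = 2" using xy by simp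
  then have 1: "card (sdiff (f B) (f (insert y (B - {x})))) = 1" using f B B1 by blast
  have "sdiff (insert y (B - {x})) (insert y' (B - {x})) = {y,y'}" using y y' xy yy unfolding sdiff_def by auto
  then have "card (sdiff (insert y (B - {x})) (insert y' (B - {x}))) = 2" using yy by simp
  then have 2: "card (sdiff (f (insert y (B - {x}))) (f (insert y' (B - {x})))) = 1" using f B1 B2 by blast
  have "sdiff B (insert y' (B - {x})) = {x,y'}" using x y' unfolding sdiff_def by auto
  then have "card (sdiff B (insert y' (B - {x}))) = 2" using xy by simp
  then have 3: "card (sdiff (f B) (f (insert y' (B - {x})))) = 1" using f B B2 by blast
  show False using no_odd_triangle[OF 1 2 3] .
qed

theorem corollary7:
  fixes \<B> :: "'n::finite set set" and d :: nat
  assumes "matroid_bases \<B>"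
    and "base_graph_iso_hypercube \<B> d"
  shows "indecomposable \<B>"
proof -
  have M: "\<B> \<noteq> {}" "\<And>B1 B2 x. B1\<in>\<B> \<Longrightarrow> B2\<in>\<B> \<Longrightarrow> x\<in>B1 - B2 \<Longrightarrow> \<exists>y\<in>B2 - B1. insert y (B1 - {x}) \<in> \<B>"
    using assms(1) unfolding matroid_bases_def by auto
  have fin: "finite \<B>" by simp
  have "card \<B> > 0" using card_gt_0_iff[of \<B>] M(1) fin by blast
  then have cpos: "real (card \<B>) > 0" by simp
  define c where "c = (\<Sum>B\<in>\<B>. (1/real(card \<B>)) *\<^sub>R ind_vec B)"
  have cP: "c \<in> base_polytope \<B>"
    unfolding c_def base_polytope_def
  proof (rule convex_sum[OF fin])
    show "convex (convex hull ind_vec ` \<B>)" by simp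
    show "(\<Sum>B\<in>\<B>. 1 / real (card \<B>)) = 1" using cpos M(1) by simp
    show "\<And>i. i \<in> \<B> \<Longrightarrow> 0 \<le> 1 / real (card \<B>)" by simp
    show "\<And>i. i \<in> \<B> \<Longrightarrow> ind_vec i \<in> convex hull ind_vec ` \<B>" by (simp add: hull_inc)
  qed
  have cx: "\<And>x. c$x = real (card {B\<in>\<B>. x\<in>B}) / real (card \<B>)"
  proof -
    fix x
    have "c$x = (\<Sum>B\<in>\<B>. (1/real(card \<B>)) * (if x \<in> B then 1 else 0))"
      unfolding c_def by (simp add: ind_vec_def)
    also have "\<dots> = (1/real(card \<B>)) * (\<Sum>B\<in>\<B>. (if x \<in> B then 1 else 0))"
      by (simp add: sum_distrib_left)
    also have "(\<Sum>B\<in>\<B>. (if x \<in> B then 1 else 0::real)) = real (card {B\<in>\<B>. x\<in>B})"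
      using fin by (simp add: sum.If_cases Int_def)
    finally show "c$x = real (card {B\<in>\<B>. x\<in>B}) / real (card \<B>)" by simp
  qed
  show ?thesis
    unfolding indecomposable_def decomposable_def
  proof
    assume "\<exists>(t::nat) (Ms :: nat \<Rightarrow> 'n set set). 2 \<le> t \<and> (\<forall>i<t. matroid_bases (Ms i)) \<and>
        base_polytope \<B> = (\<Union>i<t. base_polytope (Ms i)) \<and>
        (\<forall>i<t. \<forall>j<t. i \<noteq> j \<longrightarrow>
          base_polytope (Ms i) \<inter> base_polytope (Ms j) face_of base_polytope (Ms i) \<and>
          base_polytope (Ms i) \<inter> base_polytope (Ms j) face_of base_polytope (Ms j)) \<and>
        (\<forall>i<t. base_polytope (Ms i) \<noteq> base_polytope \<B>)"
    then obtain t :: nat and Ms :: "nat \<Rightarrow> 'n set set" where mat: "\<forall>i<t. matroid_bases (Ms i)"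
      and un: "base_polytope \<B> = (\<Union>i<t. base_polytope (Ms i))"
      and ne: "\<forall>i<t. base_polytope (Ms i) \<noteq> base_polytope \<B>" by blast
    obtain i where i: "i < t" "c \<in> base_polytope (Ms i)" using cP un by auto
    define S where "S = Ms i"
    have Sm: "S \<noteq> {}" "\<And>B1 B2 x. B1\<in>S \<Longrightarrow> B2\<in>S \<Longrightarrow> x\<in>B1 - B2 \<Longrightarrow> \<exists>y\<in>B2 - B1. insert y (B1 - {x}) \<in> S"
      using mat i(1) unfolding matroid_bases_def S_def by auto
    have sub: "S \<subseteq> \<B>"
    proof
      fix B assume "B \<in> S"
      then have "ind_vec B \<in> base_polytope S" unfolding base_polytope_def by (simp add: hull_inc)
      then have "ind_vec B \<in> base_polytope \<B>" using un i(1) S_def by auto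
      then show "B \<in> \<B>" using ind_in_hull unfolding base_polytope_def by blast
    qed
    have cov: "\<And>x. (\<forall>B'\<in>S. x\<in>B') \<Longrightarrow> (\<forall>B\<in>\<B>. x\<in>B)"
    proof -
      fix x assume allx: "\<forall>B'\<in>S. x\<in>B'"
      have "convex hull (ind_vec ` S) \<subseteq> {y. y$x = 1}"
      proof (rule hull_minimal)
        show "ind_vec ` S \<subseteq> {y. y $ x = 1}" using allx by (auto simp: ind_vec_def)
        show "convex {y::real^'n. y $ x = 1}" unfolding convex_def by (auto simp: algebra_simps)
      qed
      then have "c$x = 1" using i(2) S_def unfolding base_polytope_def by auto
      then have "real (card {B\<in>\<B>. x\<in>B}) = real (card \<B>)" using cx[of x] cpos by (auto simp: field_simps)
      then have "card {B\<in>\<B>. x\<in>B} = card \<B>" by linarith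
      then have "{B\<in>\<B>. x\<in>B} = \<B>" using fin by (intro card_subset_eq) auto
      then show "\<forall>B\<in>\<B>. x\<in>B" by blast
    qed
    have main: "\<And>B1 B2. B1 \<in> S \<Longrightarrow> B2 \<in> \<B> \<Longrightarrow> card (B1 - B2) = n \<Longrightarrow> B2 \<in> S" for n
    proof (induction n)
      case 0
      then have "B1 \<subseteq> B2" by auto
      moreover have "B2 \<subseteq> B1"
      proof
        fix z assume z: "z \<in> B2"
        show "z \<in> B1"
        proof (rule ccontr)
          assume "z \<notin> B1"
          then obtain y where "y \<in> B1 - B2" using M(2)[of B2 B1 z] 0 sub z by auto
          then show False using \<open>B1 \<subseteq> B2\<close> by auto
        qed
      qed
      ultimately show ?case using 0 by auto
    next
      case (Suc n)
      then have "B1 - B2 \<noteq> {}" by (cases "B1 - B2 = {}") auto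
      then obtain x where x: "x \<in> B1 - B2" by blast
      have B1M: "B1 \<in> \<B>" using Suc sub by auto
      obtain y where y: "y \<in> B2 - B1" "insert y (B1 - {x}) \<in> \<B>" using M(2)[OF B1M Suc.prems(2) x] by auto
      have "\<not> (\<forall>B'\<in>S. x\<in>B')" using cov x Suc.prems(2) by blast
      then obtain B1' where B1': "B1' \<in> S" "x \<notin> B1'" by blast
      obtain y' where y': "y' \<in> B1' - B1" "insert y' (B1 - {x}) \<in> S"
        using Sm(2)[OF Suc.prems(1) B1'(1)] x B1'(2) by auto
      have "y = y'"
      proof (rule ccontr)
        assume "y \<noteq> y'"
        then show False using no_triangle[OF assms(2) B1M, of x y y'] x y y' sub by auto
      qed
      have B3: "insert y (B1 - {x}) \<in> S" using y' \<open>y = y'\<close> by simp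
      have "insert y (B1 - {x}) - B2 = (B1 - B2) - {x}" using y(1) by auto
      then have "card (insert y (B1 - {x}) - B2) = n" using Suc.prems(3) x by simp
      then show ?case using Suc.IH[OF B3 Suc.prems(2)] by simp
    qed
    have "\<B> \<subseteq> S"
    proof
      fix B assume "B \<in> \<B>"
      obtain B1 where "B1 \<in> S" using Sm(1) by auto
      then show "B \<in> S" using main \<open>B \<in> \<B>\<close> by blast
    qed
    then have "S = \<B>" using sub by auto
    then show False using ne i(1) S_def by auto
  qed
qed

end
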